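(* Let $F:[n]^\ell\to\mathbb R$ be permutation-invariant and $0\le i\le\ell$. Then $$\eta_i\le2^i\binom{\ell}{i}\sum_{j=0}^i\binom{i}{j}\mathbb{E}_{Y\in[n]^j}\big[\delta_Y(F)^2\big],$$ and moreover this inequality has a degree-2 sum-of-squares proof in the formal variables $(F(X))_{X\in[n]^\ell}$ from the permutation-invariance axioms $\mathcal{A}_{inv}$.
   Context: For $T\in[n]^\ell$, $\chi_T(X)=\exp(\frac{2\pi i}{n}\sum_jT_jx_j)$ on $[n]^\ell=(\mathbb Z/n\mathbb Z)^\ell$, $|T|=|\{j:T_j\ne0\}|$, $\hat F(T)=\mathbb{E}_XF(X)\overline{\chi_T(X)}$, $F_i=\sum_{|T|=i}\hat F(T)\chi_T$, and $\eta_i=\mathbb{E}_{X\in[n]^\ell}|F_i(X)|^2=\sum_{|T|=i}|\hat F(T)|^2$. $F$ is permutation-invariant if $F(x_1,\dots,x_\ell)=F(x_{\sigma(1)},\dots,x_{\sigma(\ell)})$ for all $\sigma\in S_\ell$; $\mathcal{A}_{inv}$ is the set of these equalities. For $Y\in[n]^j$, $\delta_Y(F)=\mathbb{E}_{x\in[n]^{\ell-j}}F(Y,x)$, and $\delta_\emptyset(F)=\mathbb{E}_XF(X)$. *)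

theory Defs
  imports "HOL-Analysis.Analysis" "HOL-Combinatorics.Permutations"
begin

text \<open>[n]^l = (Z/nZ)^l, represented as lists of length l with entries in {0..<n}.\<close>
definition cube :: "nat \<Rightarrow> nat \<Rightarrow> nat list set" where
  "cube n l = {xs. length xs = l \<and> set xs \<subseteq> {..<n}}"

definition chi :: "nat \<Rightarrow> nat list \<Rightarrow> nat list \<Rightarrow> complex" where
  "chi n T X = exp (2 * pi * \<i> / of_nat n * of_nat (\<Sum>j<length X. T ! j * X ! j))"

definition wt :: "nat list \<Rightarrow> nat" where
  "wt T = card {j. j < length T \<and> T ! j \<noteq> 0}"

definition fourier :: "nat \<Rightarrow> nat \<Rightarrow> (nat list \<Rightarrow> real) \<Rightarrow> nat list \<Rightarrow> complex" where
  "fourier n l F T = (\<Sum>X\<in>cube n l. of_real (F X) * cnj (chi n T X)) / of_nat (card (cube n l))"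

definition eta :: "nat \<Rightarrow> nat \<Rightarrow> (nat list \<Rightarrow> real) \<Rightarrow> nat \<Rightarrow> real" where
  "eta n l F i = (\<Sum>T\<in>{T\<in>cube n l. wt T = i}. (cmod (fourier n l F T))\<^sup>2)"

definition delta :: "nat \<Rightarrow> nat \<Rightarrow> (nat list \<Rightarrow> real) \<Rightarrow> nat list \<Rightarrow> real" where
  "delta n l F Y = (\<Sum>x\<in>cube n (l - length Y). F (Y @ x)) / real (card (cube n (l - length Y)))"

definition perm_invariant :: "nat \<Rightarrow> nat \<Rightarrow> (nat list \<Rightarrow> real) \<Rightarrow> bool" where
  "perm_invariant n l F \<longleftrightarrow>
     (\<forall>\<sigma> X. \<sigma> permutes {..<l} \<longrightarrow> X \<in> cube n l \<longrightarrow> F X = F (permute_list \<sigma> X))"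

text \<open>A degree-2 sum-of-squares proof of "P(F) >= 0" in the formal variables (F X), X in [n]^l,
  from the axioms A_inv = {F X - F (sigma X) = 0}: a polynomial identity
  P = sum of squares of degree-<=1 polynomials + sum of degree-<=1 multipliers times axioms.
  Polynomials in the variables are represented as functions of the assignment F; since they are
  real polynomials, identity for all real assignments is identity of polynomials.\<close>
definition sos2_inv :: "nat \<Rightarrow> nat \<Rightarrow> ((nat list \<Rightarrow> real) \<Rightarrow> real) \<Rightarrow> bool" where
  "sos2_inv n l P \<longleftrightarrow>
    (\<exists>(m::nat) (c0::nat \<Rightarrow> real) (c::nat \<Rightarrow> nat list \<Rightarrow> real)
        (a0::nat list \<Rightarrow> (nat \<Rightarrow> nat) \<Rightarrow> real) (a::nat list \<Rightarrow> (nat \<Rightarrow> nat) \<Rightarrow> nat list \<Rightarrow> real).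
      \<forall>F::nat list \<Rightarrow> real.
        P F = (\<Sum>k<m. (c0 k + (\<Sum>X\<in>cube n l. c k X * F X))\<^sup>2)
            + (\<Sum>X\<in>cube n l. \<Sum>\<sigma>\<in>{\<sigma>. \<sigma> permutes {..<l}}.
                 (a0 X \<sigma> + (\<Sum>Y\<in>cube n l. a X \<sigma> Y * F Y)) * (F X - F (permute_list \<sigma> X))))"

definition rhsC7 :: "nat \<Rightarrow> nat \<Rightarrow> (nat list \<Rightarrow> real) \<Rightarrow> nat \<Rightarrow> real" where
  "rhsC7 n l F i = 2 ^ i * real (l choose i) *
     (\<Sum>j=0..i. real (i choose j) *
        ((\<Sum>Y\<in>cube n j. (delta n l F Y)\<^sup>2) / real (card (cube n j))))"

end

theory Submission
  imports Defs
begin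


lemma cube_alt: "cube n l = {xs. set xs \<subseteq> {..<n} \<and> length xs = l}"
  unfolding cube_def by auto

lemma finite_cube[simp]: "finite (cube n l)"
  unfolding cube_alt by (rule finite_lists_length_eq) simp

lemma card_cube: "card (cube n l) = n ^ l"
  unfolding cube_alt by (simp add: card_lists_length_eq)

lemma cube_Nil[simp]: "cube n 0 = {[]}"
  unfolding cube_def by auto

lemma sum_cube_Suc:
  "(\<Sum>X\<in>cube n (Suc l). f X) = (\<Sum>x<n. \<Sum>X\<in>cube n l. f (x # X))"
proof -
  have "(\<Sum>X\<in>cube n (Suc l). f X) = (\<Sum>p\<in>{..<n} \<times> cube n l. f (fst p # snd p))"
    by (rule sum.reindex_bij_witness[where i="\<lambda>p. fst p # snd p" and j="\<lambda>X. (hd X, tl X)"])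
       (auto simp: cube_def length_Suc_conv)
  also have "\<dots> = (\<Sum>x<n. \<Sum>X\<in>cube n l. f (x # X))"
    by (simp add: sum.cartesian_product split_def)
  finally show ?thesis .
qed

lemma sum_cube_append:
  "(\<Sum>W\<in>cube n (a + b). f W) = (\<Sum>Y\<in>cube n a. \<Sum>x\<in>cube n b. f (Y @ x))"
proof -
  have "(\<Sum>W\<in>cube n (a+b). f W) = (\<Sum>p\<in>cube n a \<times> cube n b. f (fst p @ snd p))"
    by (rule sum.reindex_bij_witness[where i="\<lambda>p. fst p @ snd p" and j="\<lambda>X. (take a X, drop a X)"])
       (auto simp: cube_def dest: in_set_takeD in_set_dropD)
  also have "\<dots> = (\<Sum>Y\<in>cube n a. \<Sum>x\<in>cube n b. f (Y @ x))"
    by (simp add: sum.cartesian_product split_def)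
  finally show ?thesis .
qed

definition lin :: "nat \<Rightarrow> nat \<Rightarrow> ((nat list \<Rightarrow> real) \<Rightarrow> real) \<Rightarrow> bool" where
  "lin n l f \<longleftrightarrow> (\<exists>c0 c. \<forall>G. f G = c0 + (\<Sum>X\<in>cube n l. c X * G X))"

lemma lin_const: "lin n l (\<lambda>G. a)"
  unfolding lin_def by (rule exI[of _ a], rule exI[of _ "\<lambda>_. 0"]) simp

lemma lin_eval: assumes "X \<in> cube n l" shows "lin n l (\<lambda>G. G X)"
proof -
  have "(\<Sum>Y\<in>cube n l. (if Y = X then 1 else 0) * G Y) = G X" for G :: "nat list \<Rightarrow> real"
  proof -
    have "(\<Sum>Y\<in>cube n l. (if Y = X then 1 else 0) * G Y) = (\<Sum>Y\<in>cube n l. if Y = X then G X else 0)"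
      by (rule sum.cong) auto
    also have "\<dots> = G X" using assms by (simp add: sum.delta')
    finally show ?thesis .
  qed
  then show ?thesis unfolding lin_def
    by (intro exI[of _ 0] exI[of _ "\<lambda>Y. if Y = X then 1 else 0"]) simp
qed

lemma lin_add: "lin n l f \<Longrightarrow> lin n l g \<Longrightarrow> lin n l (\<lambda>G. f G + g G)"
  unfolding lin_def
proof (elim exE)
  fix a0 a b0 b assume A: "\<forall>G. f G = a0 + (\<Sum>X\<in>cube n l. a X * G X)"
    and B: "\<forall>G. g G = b0 + (\<Sum>X\<in>cube n l. b X * G X)"
  show "\<exists>c0 c. \<forall>G. f G + g G = c0 + (\<Sum>X\<in>cube n l. c X * G X)"
    by (rule exI[of _ "a0+b0"], rule exI[of _ "\<lambda>X. a X + b X"])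
       (simp add: A B distrib_right sum.distrib)
qed

lemma lin_scale: "lin n l f \<Longrightarrow> lin n l (\<lambda>G. r * f G)"
  unfolding lin_def
proof (elim exE)
  fix a0 a assume A: "\<forall>G. f G = a0 + (\<Sum>X\<in>cube n l. a X * G X)"
  show "\<exists>c0 c. \<forall>G. r * f G = c0 + (\<Sum>X\<in>cube n l. c X * G X)"
    by (rule exI[of _ "r*a0"], rule exI[of _ "\<lambda>X. r * a X"])
       (simp add: A distrib_left sum_distrib_left mult.assoc)
qed

lemma lin_scale': "lin n l f \<Longrightarrow> lin n l (\<lambda>G. f G * r)"
  using lin_scale[of n l f r] by (simp add: mult.commute)

lemma lin_div: "lin n l f \<Longrightarrow> lin n l (\<lambda>G. f G / r)"
  using lin_scale[of n l f "1/r"] by simp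

lemma lin_neg: "lin n l f \<Longrightarrow> lin n l (\<lambda>G. - f G)"
  using lin_scale[of n l f "-1"] by simp

lemma lin_diff: "lin n l f \<Longrightarrow> lin n l g \<Longrightarrow> lin n l (\<lambda>G. f G - g G)"
  using lin_add[OF _ lin_neg] by simp

lemma lin_sum: "finite A \<Longrightarrow> (\<And>a. a \<in> A \<Longrightarrow> lin n l (f a)) \<Longrightarrow> lin n l (\<lambda>G. \<Sum>a\<in>A. f a G)"
  by (induction A rule: finite_induct) (auto intro: lin_const lin_add)

lemma sum_lessThan_add_nat: "(\<Sum>k<m1+m2. f k) = (\<Sum>k<m1. f k) + (\<Sum>k<m2. f (m1+k))"
  for f :: "nat \<Rightarrow> 'a::comm_monoid_add"
  by (induction m2) (auto simp: add.assoc)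

lemma sos_zero: "sos2_inv n l (\<lambda>G. 0)"
  unfolding sos2_inv_def
  by (rule exI[of _ 0], rule exI[of _ "\<lambda>_. 0"], rule exI[of _ "\<lambda>_ _. 0"],
      rule exI[of _ "\<lambda>_ _. 0"], rule exI[of _ "\<lambda>_ _ _. 0"]) simp

lemma sos_add:
  assumes "sos2_inv n l P" "sos2_inv n l Q"
  shows "sos2_inv n l (\<lambda>G. P G + Q G)"
proof -
  from assms(1) obtain m1 c01 c1 a01 a1 where H1: "\<forall>G. P G = (\<Sum>k<(m1::nat). (c01 k + (\<Sum>X\<in>cube n l. c1 k X * G X))\<^sup>2)
            + (\<Sum>X\<in>cube n l. \<Sum>\<sigma>\<in>{\<sigma>. \<sigma> permutes {..<l}}.
                 (a01 X \<sigma> + (\<Sum>Y\<in>cube n l. a1 X \<sigma> Y * G Y)) * (G X - G (permute_list \<sigma> X)))"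
    unfolding sos2_inv_def by (elim exE) (erule that)
  from assms(2) obtain m2 c02 c2 a02 a2 where H2: "\<forall>G. Q G = (\<Sum>k<(m2::nat). (c02 k + (\<Sum>X\<in>cube n l. c2 k X * G X))\<^sup>2)
            + (\<Sum>X\<in>cube n l. \<Sum>\<sigma>\<in>{\<sigma>. \<sigma> permutes {..<l}}.
                 (a02 X \<sigma> + (\<Sum>Y\<in>cube n l. a2 X \<sigma> Y * G Y)) * (G X - G (permute_list \<sigma> X)))"
    unfolding sos2_inv_def by (elim exE) (erule that)
  define c0 where "c0 k = (if k < m1 then c01 k else c02 (k - m1))" for k
  define c where "c k = (if k < m1 then c1 k else c2 (k - m1))" for k
  have sq: "(\<Sum>k<m1+m2. (c0 k + (\<Sum>X\<in>cube n l. c k X * G X))\<^sup>2)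
     = (\<Sum>k<(m1::nat). (c01 k + (\<Sum>X\<in>cube n l. c1 k X * G X))\<^sup>2) + (\<Sum>k<m2. (c02 k + (\<Sum>X\<in>cube n l. c2 k X * G X))\<^sup>2)" for G
    by (simp add: sum_lessThan_add_nat c0_def c_def)
  show ?thesis unfolding sos2_inv_def
    apply (rule exI[of _ "m1+m2"], rule exI[of _ c0], rule exI[of _ c],
      rule exI[of _ "\<lambda>X \<sigma>. a01 X \<sigma> + a02 X \<sigma>"], rule exI[of _ "\<lambda>X \<sigma> Y. a1 X \<sigma> Y + a2 X \<sigma> Y"])
    apply (simp only: H1 H2 sq)
    apply (simp add: distrib_right sum.distrib)
    done
qed

lemma sos_sq:
  assumes "lin n l f" shows "sos2_inv n l (\<lambda>G. (f G)\<^sup>2)"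
proof -
  from assms obtain c0 c where H: "\<forall>G. f G = c0 + (\<Sum>X\<in>cube n l. c X * G X)"
    unfolding lin_def by blast
  show ?thesis unfolding sos2_inv_def
    by (rule exI[of _ 1], rule exI[of _ "\<lambda>_. c0"], rule exI[of _ "\<lambda>_. c"],
      rule exI[of _ "\<lambda>_ _. 0"], rule exI[of _ "\<lambda>_ _ _. 0"]) (simp add: H)
qed

lemma sos_ax:
  assumes "lin n l f" "X \<in> cube n l" "\<sigma> permutes {..<l}"
  shows "sos2_inv n l (\<lambda>G. f G * (G X - G (permute_list \<sigma> X)))"
proof -
  from assms obtain c0 c where H: "\<forall>G. f G = c0 + (\<Sum>X\<in>cube n l. c X * G X)"
    unfolding lin_def by blast
  define a0 where "a0 X' \<sigma>' = (if X' = X \<and> \<sigma>' = \<sigma> then c0 else 0)" for X' and \<sigma>' :: "nat \<Rightarrow> nat"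
  define a where "a X' \<sigma>' Y = (if X' = X \<and> \<sigma>' = \<sigma> then c Y else 0)" for X' and \<sigma>' :: "nat \<Rightarrow> nat" and Y
  have fin: "finite {\<sigma>. \<sigma> permutes {..<l}}" by (rule finite_permutations) simp
  have E: "(\<Sum>X'\<in>cube n l. \<Sum>\<sigma>'\<in>{\<sigma>. \<sigma> permutes {..<l}}.
       (a0 X' \<sigma>' + (\<Sum>Y\<in>cube n l. a X' \<sigma>' Y * G Y)) * (G X' - G (permute_list \<sigma>' X')))
     = f G * (G X - G (permute_list \<sigma> X))" for G
  proof -
    have "(\<Sum>X'\<in>cube n l. \<Sum>\<sigma>'\<in>{\<sigma>. \<sigma> permutes {..<l}}.
       (a0 X' \<sigma>' + (\<Sum>Y\<in>cube n l. a X' \<sigma>' Y * G Y)) * (G X' - G (permute_list \<sigma>' X')))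
      = (\<Sum>X'\<in>cube n l. if X' = X then (\<Sum>\<sigma>'\<in>{\<sigma>. \<sigma> permutes {..<l}}.
          if \<sigma>' = \<sigma> then f G * (G X - G (permute_list \<sigma> X)) else 0) else 0)"
      by (intro sum.cong refl) (auto simp: a0_def a_def H intro!: sum.cong)
    also have "\<dots> = f G * (G X - G (permute_list \<sigma> X))"
      using assms(2,3) fin by (simp add: sum.delta')
    finally show ?thesis .
  qed
  show ?thesis unfolding sos2_inv_def
    by (rule exI[of _ 0], rule exI[of _ "\<lambda>_. 0"], rule exI[of _ "\<lambda>_ _. 0"],
      rule exI[of _ a0], rule exI[of _ a]) (simp add: E)
qed

lemma sos_sum: "finite A \<Longrightarrow> (\<And>a. a \<in> A \<Longrightarrow> sos2_inv n l (P a)) \<Longrightarrow> sos2_inv n l (\<lambda>G. \<Sum>a\<in>A. P a G)"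
  by (induction A rule: finite_induct) (auto intro: sos_zero sos_add)

lemma sos_cong: "sos2_inv n l Q \<Longrightarrow> (\<And>G. P G = Q G) \<Longrightarrow> sos2_inv n l P"
proof -
  assume "sos2_inv n l Q" "\<And>G. P G = Q G"
  then have "P = Q" by (intro ext) auto
  with \<open>sos2_inv n l Q\<close> show ?thesis by simp
qed

lemma sos_sound:
  assumes "sos2_inv n l P" "perm_invariant n l F"
  shows "P F \<ge> 0"
proof -
  from assms(1) obtain m c0 c a0 a where H: "\<forall>G. P G = (\<Sum>k<(m::nat). (c0 k + (\<Sum>X\<in>cube n l. c k X * G X))\<^sup>2)
            + (\<Sum>X\<in>cube n l. \<Sum>\<sigma>\<in>{\<sigma>. \<sigma> permutes {..<l}}.
                 (a0 X \<sigma> + (\<Sum>Y\<in>cube n l. a X \<sigma> Y * G Y)) * (G X - G (permute_list \<sigma> X)))"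
    unfolding sos2_inv_def by (elim exE) (erule that)
  have "(\<Sum>X\<in>cube n l. \<Sum>\<sigma>\<in>{\<sigma>. \<sigma> permutes {..<l}}.
                 (a0 X \<sigma> + (\<Sum>Y\<in>cube n l. a X \<sigma> Y * F Y)) * (F X - F (permute_list \<sigma> X))) = 0"
    using assms(2) unfolding perm_invariant_def by (intro sum.neutral ballI) auto
  then show ?thesis using H by (simp add: sum_nonneg)
qed




lemma root_sum:
  fixes t t' n :: nat
  assumes n: "n \<ge> 1" and t: "t < n" and t': "t' < n"
  shows "(\<Sum>x<n. exp (2 * pi * \<i> / of_nat n * of_nat (t * x)) *
                  cnj (exp (2 * pi * \<i> / of_nat n * of_nat (t' * x))))
         = (if t = t' then of_nat n else 0)"
proof -
  define d :: real where "d = real t - real t'"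
  define w where "w = exp (2 * pi * \<i> * of_real (d / n))"
  have trm: "exp (2 * pi * \<i> / of_nat n * of_nat (t * x)) *
                  cnj (exp (2 * pi * \<i> / of_nat n * of_nat (t' * x))) = w ^ x" for x
  proof -
    have "exp (2 * pi * \<i> / of_nat n * of_nat (t * x)) *
                  cnj (exp (2 * pi * \<i> / of_nat n * of_nat (t' * x)))
        = exp (2 * pi * \<i> / of_nat n * of_nat (t * x) - 2 * pi * \<i> / of_nat n * of_nat (t' * x))"
      by (simp add: exp_cnj exp_diff exp_minus field_simps)
    also have "2 * pi * \<i> / of_nat n * of_nat (t * x) - 2 * pi * \<i> / of_nat n * of_nat (t' * x)
        = of_nat x * (2 * pi * \<i> * of_real (d / n))"
      by (simp add: d_def field_simps) (simp add: diff_divide_distrib)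
    also have "exp \<dots> = w ^ x" unfolding w_def by (rule exp_of_nat_mult)
    finally show ?thesis .
  qed
  have S: "(\<Sum>x<n. exp (2 * pi * \<i> / of_nat n * of_nat (t * x)) *
                  cnj (exp (2 * pi * \<i> / of_nat n * of_nat (t' * x)))) = (\<Sum>x<n. w ^ x)"
    by (simp only: trm)
  show ?thesis
  proof (cases "t = t'")
    case True
    then have "w = 1" by (simp add: w_def d_def)
    then show ?thesis using True by (subst S) simp
  next
    case False
    have wn: "w ^ n = 1"
    proof -
      have "w ^ n = exp (of_nat n * (2 * pi * \<i> * of_real (d / n)))"
        unfolding w_def by (rule exp_of_nat_mult[symmetric])
      also have "of_nat n * (2 * pi * \<i> * of_real (d / n)) = (2 * of_real d * pi) * \<i>"
        using n by (simp add: field_simps)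
      also have "exp \<dots> = 1"
        by (rule exp_integer_2pi) (simp add: d_def)
      finally show ?thesis .
    qed
    have w1: "w \<noteq> 1"
    proof
      assume "w = 1"
      then obtain k :: int where k: "2 * pi * (d / n) = of_int (2 * k) * pi"
        unfolding w_def exp_eq_1 by auto
      then have "(2 * pi) * (d / n) = (2 * pi) * of_int k" by (simp add: algebra_simps)
      then have "d / n = of_int k" using pi_gt_zero by (subst (asm) mult_left_cancel) auto
      then have "d = of_int k * n" using n by (simp add: field_simps)
      then have "real_of_int (int t - int t') = real_of_int (k * int n)" by (simp add: d_def)
      then have kk: "int t - int t' = k * int n" by (simp only: of_int_eq_iff)
      have "k = 0"
      proof (rule ccontr)
        assume "k \<noteq> 0"
        then have "1 \<le> \<bar>k\<bar>" by simp
        then have "int n \<le> \<bar>k\<bar> * int n" using n by (simp add: mult_le_cancel_right1)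
        also have "\<dots> = \<bar>int t - int t'\<bar>" by (simp add: kk abs_mult)
        finally show False using t t' by linarith
      qed
      then show False using kk False by simp
    qed
    show ?thesis using False w1 wn by (subst S) (simp add: sum_gp_strict)
  qed
qed

lemma chi_Nil[simp]: "chi n T [] = 1"
  by (simp add: chi_def)

lemma sum_Cons_prod: "(\<Sum>j<Suc m. (t # T) ! j * (x # X) ! j) = t * x + (\<Sum>j<m. T ! j * X ! j)"
  by (subst sum.lessThan_Suc_shift) simp

lemma chi_Cons: "chi n (t # T) (x # X) = exp (2 * pi * \<i> / of_nat n * of_nat (t * x)) * chi n T X"
  unfolding chi_def by (simp only: length_Cons sum_Cons_prod of_nat_add distrib_left exp_add)

lemma cube_Suc_iff: "T \<in> cube n (Suc l) \<longleftrightarrow> (\<exists>t T1. T = t # T1 \<and> t < n \<and> T1 \<in> cube n l)"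
  unfolding cube_def by (cases T) auto

lemma orth:
  assumes n: "n \<ge> 1"
  shows "T \<in> cube n l \<Longrightarrow> T' \<in> cube n l \<Longrightarrow>
    (\<Sum>X\<in>cube n l. chi n T X * cnj (chi n T' X)) = (if T = T' then of_nat (n ^ l) else 0)"
proof (induction l arbitrary: T T')
  case 0
  then show ?case by simp
next
  case (Suc l)
  from Suc.prems obtain t T1 t' T1' where T: "T = t # T1" "t < n" "T1 \<in> cube n l"
    and T': "T' = t' # T1'" "t' < n" "T1' \<in> cube n l"
    unfolding cube_Suc_iff by blast
  define e where "e x = exp (2 * pi * \<i> / of_nat n * of_nat (t * x)) *
                  cnj (exp (2 * pi * \<i> / of_nat n * of_nat (t' * x)))" for x
  have R: "(\<Sum>x<n. e x) = (if t = t' then of_nat n else 0)"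
    unfolding e_def by (rule root_sum[OF n T(2) T'(2)])
  have "(\<Sum>X\<in>cube n (Suc l). chi n T X * cnj (chi n T' X))
     = (\<Sum>x<n. \<Sum>X\<in>cube n l. e x * (chi n T1 X * cnj (chi n T1' X)))"
    unfolding sum_cube_Suc T T' chi_Cons e_def by (simp add: algebra_simps)
  also have "\<dots> = (\<Sum>x<n. e x * (\<Sum>X\<in>cube n l. chi n T1 X * cnj (chi n T1' X)))"
    by (simp add: sum_distrib_left)
  also have "\<dots> = (\<Sum>x<n. e x) * (if T1 = T1' then of_nat (n ^ l) else 0)"
    by (simp add: Suc.IH[OF T(3) T'(3)] sum_distrib_right)
  also have "\<dots> = (if T = T' then of_nat (n ^ Suc l) else 0)"
    by (simp add: R T T')
  finally show ?case .
qed




definition mrg :: "nat set \<Rightarrow> nat list \<Rightarrow> nat list \<Rightarrow> nat list" where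
  "mrg S X Z = map (\<lambda>k. if k \<in> S then X ! k else Z ! k) [0..<length X]"

definition suppT :: "nat list \<Rightarrow> nat set" where
  "suppT T = {j. j < length T \<and> T ! j \<noteq> 0}"

definition AS :: "nat \<Rightarrow> nat \<Rightarrow> nat set \<Rightarrow> (nat list \<Rightarrow> real) \<Rightarrow> nat list \<Rightarrow> real" where
  "AS n l S G X = (\<Sum>Z\<in>cube n l. G (mrg S X Z)) / real (n ^ l)"

lemma length_mrg[simp]: "length (mrg S X Z) = length X"
  by (simp add: mrg_def)

lemma nth_mrg: "k < length X \<Longrightarrow> mrg S X Z ! k = (if k \<in> S then X ! k else Z ! k)"
  by (simp add: mrg_def)

lemma mrg_cube: "X \<in> cube n l \<Longrightarrow> Z \<in> cube n l \<Longrightarrow> mrg S X Z \<in> cube n l"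
  unfolding cube_def mrg_def by (auto simp: nth_mem subset_iff)

lemma cube_length: "X \<in> cube n l \<Longrightarrow> length X = l"
  by (simp add: cube_def)

lemma mrg_mrg: "length X = length Z \<Longrightarrow> mrg S (mrg S X Z) (mrg S Z X) = X"
  by (rule nth_equalityI) (auto simp: nth_mrg)

lemma mrg_mrg_cube: "X \<in> cube n l \<Longrightarrow> Z \<in> cube n l \<Longrightarrow> mrg S (mrg S X Z) (mrg S Z X) = X"
  by (rule mrg_mrg) (simp add: cube_length)

lemma sum_mrg:
  fixes g :: "nat list \<Rightarrow> 'a::comm_semiring_1"
  shows "(\<Sum>X\<in>cube n l. \<Sum>Z\<in>cube n l. g (mrg S X Z)) = of_nat (n ^ l) * (\<Sum>W\<in>cube n l. g W)"
proof -
  have "(\<Sum>X\<in>cube n l. \<Sum>Z\<in>cube n l. g (mrg S X Z)) = (\<Sum>p\<in>cube n l \<times> cube n l. g (mrg S (fst p) (snd p)))"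
    by (simp add: sum.cartesian_product split_def)
  also have "\<dots> = (\<Sum>p\<in>cube n l \<times> cube n l. g (fst p))"
    by (rule sum.reindex_bij_witness[where i="\<lambda>p. (mrg S (fst p) (snd p), mrg S (snd p) (fst p))"
          and j="\<lambda>p. (mrg S (fst p) (snd p), mrg S (snd p) (fst p))"])
       (auto simp: mrg_cube mrg_mrg_cube)
  also have "\<dots> = (\<Sum>W\<in>cube n l. \<Sum>V\<in>cube n l. g W)"
    by (simp only: sum.cartesian_product split_def)
  also have "\<dots> = of_nat (n ^ l) * (\<Sum>W\<in>cube n l. g W)"
    by (simp add: card_cube sum_distrib_left mult.commute)
  finally show ?thesis .
qed

lemma chi_mrg:
  assumes "suppT T \<subseteq> S" "length T = length X" "length Z = length X"
  shows "chi n T (mrg S X Z) = chi n T X"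
proof -
  have "(\<Sum>j<length X. T ! j * mrg S X Z ! j) = (\<Sum>j<length X. T ! j * X ! j)"
    using assms by (intro sum.cong refl) (auto simp: nth_mrg suppT_def)
  then show ?thesis by (simp add: chi_def)
qed

lemma fourier_AS:
  assumes n: "n \<ge> 1" and T: "T \<in> cube n l" and S: "suppT T \<subseteq> S"
  shows "(\<Sum>X\<in>cube n l. of_real (AS n l S G X) * cnj (chi n T X)) = of_nat (n ^ l) * fourier n l G T"
proof -
  have N0: "(of_nat (n ^ l) :: complex) \<noteq> 0" using n by simp
  have "(\<Sum>X\<in>cube n l. of_real (AS n l S G X) * cnj (chi n T X))
     = (\<Sum>X\<in>cube n l. \<Sum>Z\<in>cube n l. of_real (G (mrg S X Z)) * cnj (chi n T (mrg S X Z))) / of_nat (n ^ l)"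
    unfolding AS_def
    apply (simp add: sum_divide_distrib sum_distrib_right)
    apply (intro sum.cong refl)
    using T S by (auto simp: chi_mrg cube_def)
  also have "\<dots> = (\<Sum>W\<in>cube n l. of_real (G W) * cnj (chi n T W))"
    by (simp only: sum_mrg[of "\<lambda>W. of_real (G W) * cnj (chi n T W)"]) (use N0 in simp)
  also have "\<dots> = of_nat (n ^ l) * fourier n l G T"
    unfolding fourier_def card_cube using N0 by simp
  finally show ?thesis .
qed




definition clin :: "nat \<Rightarrow> nat \<Rightarrow> ((nat list \<Rightarrow> real) \<Rightarrow> complex) \<Rightarrow> bool" where
  "clin n l f \<longleftrightarrow> lin n l (\<lambda>G. Re (f G)) \<and> lin n l (\<lambda>G. Im (f G))"

lemma clin_of_real: "lin n l f \<Longrightarrow> clin n l (\<lambda>G. of_real (f G))"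
  unfolding clin_def by (simp add: lin_const)

lemma clin_add: "clin n l f \<Longrightarrow> clin n l g \<Longrightarrow> clin n l (\<lambda>G. f G + g G)"
  unfolding clin_def by (auto intro: lin_add)

lemma clin_diff: "clin n l f \<Longrightarrow> clin n l g \<Longrightarrow> clin n l (\<lambda>G. f G - g G)"
  unfolding clin_def by (auto intro: lin_diff)

lemma clin_mult: "clin n l f \<Longrightarrow> clin n l (\<lambda>G. f G * c)"
  unfolding clin_def by (auto intro!: lin_diff lin_add lin_scale')

lemma clin_cmult: "clin n l f \<Longrightarrow> clin n l (\<lambda>G. c * f G)"
  using clin_mult[of n l f c] by (simp add: mult.commute)

lemma clin_divide: "clin n l f \<Longrightarrow> clin n l (\<lambda>G. f G / c)"
  using clin_mult[of n l f "inverse c"] by (simp add: divide_inverse)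

lemma clin_sum: "finite A \<Longrightarrow> (\<And>a. a \<in> A \<Longrightarrow> clin n l (f a)) \<Longrightarrow> clin n l (\<lambda>G. \<Sum>a\<in>A. f a G)"
  unfolding clin_def by (auto simp: Re_sum Im_sum intro!: lin_sum)

lemma lin_AS: "X \<in> cube n l \<Longrightarrow> lin n l (\<lambda>G. AS n l S G X)"
  unfolding AS_def by (intro lin_div lin_sum) (auto intro: lin_eval mrg_cube)

lemma clin_fourier: "clin n l (\<lambda>G. fourier n l G T)"
  unfolding fourier_def
  by (intro clin_divide clin_sum clin_mult clin_of_real lin_eval) auto

lemma cnj_fourier_AS:
  assumes n: "n \<ge> 1" and T: "T \<in> cube n l" and S: "suppT T \<subseteq> S"
  shows "(\<Sum>X\<in>cube n l. of_real (AS n l S G X) * chi n T X) = of_nat (n ^ l) * cnj (fourier n l G T)"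
proof -
  have "cnj (\<Sum>X\<in>cube n l. of_real (AS n l S G X) * cnj (chi n T X)) = cnj (of_nat (n ^ l) * fourier n l G T)"
    by (simp only: fourier_AS[OF assms])
  then show ?thesis by (simp add: cnj_sum)
qed

lemma mult_cnj_self: "z * cnj z = of_real (cmod z) * of_real (cmod z)"
  by (metis complex_norm_square of_real_mult power2_eq_square)

lemma bessel_identity:
  assumes n: "n \<ge> 1" and M: "finite M" "\<And>T. T \<in> M \<Longrightarrow> T \<in> cube n l \<and> suppT T \<subseteq> S"
  shows "(\<Sum>X\<in>cube n l. (cmod (of_real (AS n l S G X) - (\<Sum>T\<in>M. fourier n l G T * chi n T X)))\<^sup>2)
       = (\<Sum>X\<in>cube n l. (AS n l S G X)\<^sup>2) - real (n ^ l) * (\<Sum>T\<in>M. (cmod (fourier n l G T))\<^sup>2)"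
proof -
  define a where "a X = (of_real (AS n l S G X) :: complex)" for X
  define c where "c T = fourier n l G T" for T
  define N where "N = (of_nat (n ^ l) :: complex)"
  define b where "b X = (\<Sum>T\<in>M. c T * chi n T X)" for X
  have cnja: "cnj (a X) = a X" for X by (simp add: a_def)
  have F1: "(\<Sum>X\<in>cube n l. a X * cnj (chi n T X)) = N * c T" if "T \<in> M" for T
    unfolding a_def c_def N_def using M(2)[OF that] by (intro fourier_AS n) auto
  have F2: "(\<Sum>X\<in>cube n l. a X * chi n T X) = N * cnj (c T)" if "T \<in> M" for T
    unfolding a_def c_def N_def using M(2)[OF that] by (intro cnj_fourier_AS n) auto
  have O: "(\<Sum>X\<in>cube n l. chi n T X * cnj (chi n T' X)) = (if T = T' then N else 0)"
    if "T \<in> M" "T' \<in> M" for T T'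
    unfolding N_def using M(2)[OF that(1)] M(2)[OF that(2)] by (intro orth n) auto
  have s1: "(\<Sum>X\<in>cube n l. a X * cnj (b X)) = N * (\<Sum>T\<in>M. c T * cnj (c T))"
  proof -
    have "(\<Sum>X\<in>cube n l. a X * cnj (b X)) = (\<Sum>X\<in>cube n l. \<Sum>T\<in>M. cnj (c T) * (a X * cnj (chi n T X)))"
      by (simp add: b_def cnj_sum sum_distrib_left algebra_simps)
    also have "\<dots> = (\<Sum>T\<in>M. cnj (c T) * (\<Sum>X\<in>cube n l. a X * cnj (chi n T X)))"
      by (subst sum.swap) (simp add: sum_distrib_left)
    also have "\<dots> = (\<Sum>T\<in>M. cnj (c T) * (N * c T))"
      by (intro sum.cong refl) (simp add: F1)
    finally show ?thesis by (simp add: sum_distrib_left algebra_simps)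
  qed
  have s2: "(\<Sum>X\<in>cube n l. b X * a X) = N * (\<Sum>T\<in>M. c T * cnj (c T))"
  proof -
    have "(\<Sum>X\<in>cube n l. b X * a X) = (\<Sum>X\<in>cube n l. \<Sum>T\<in>M. c T * (a X * chi n T X))"
      by (simp add: b_def sum_distrib_left sum_distrib_right algebra_simps)
    also have "\<dots> = (\<Sum>T\<in>M. c T * (\<Sum>X\<in>cube n l. a X * chi n T X))"
      by (subst sum.swap) (simp add: sum_distrib_left)
    also have "\<dots> = (\<Sum>T\<in>M. c T * (N * cnj (c T)))"
      by (intro sum.cong refl) (simp add: F2)
    finally show ?thesis by (simp add: sum_distrib_left algebra_simps)
  qed
  have s3: "(\<Sum>X\<in>cube n l. b X * cnj (b X)) = N * (\<Sum>T\<in>M. c T * cnj (c T))"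
  proof -
    have "(\<Sum>X\<in>cube n l. b X * cnj (b X))
        = (\<Sum>X\<in>cube n l. \<Sum>T\<in>M. \<Sum>T'\<in>M. c T * cnj (c T') * (chi n T X * cnj (chi n T' X)))"
      by (simp add: b_def cnj_sum sum_distrib_left sum_distrib_right algebra_simps)
         (rule sum.cong[OF refl], rule sum.swap)
    also have "\<dots> = (\<Sum>T\<in>M. \<Sum>T'\<in>M. c T * cnj (c T') * (\<Sum>X\<in>cube n l. chi n T X * cnj (chi n T' X)))"
      by (simp add: sum_distrib_left sum.swap[of _ "cube n l"])
    also have "\<dots> = (\<Sum>T\<in>M. \<Sum>T'\<in>M. if T' = T then c T * cnj (c T) * N else 0)"
      by (intro sum.cong refl) (auto simp: O)
    also have "\<dots> = (\<Sum>T\<in>M. c T * cnj (c T) * N)"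
      using M(1) by (simp add: sum.delta)
    finally show ?thesis by (simp add: sum_distrib_left algebra_simps)
  qed
  have "of_real (\<Sum>X\<in>cube n l. (cmod (a X - b X))\<^sup>2)
      = (\<Sum>X\<in>cube n l. (a X - b X) * cnj (a X - b X))"
    by (simp only: of_real_sum complex_norm_square)
  also have "\<dots> = (\<Sum>X\<in>cube n l. a X * a X - a X * cnj (b X) - b X * a X + b X * cnj (b X))"
    by (intro sum.cong refl) (simp add: cnja algebra_simps)
  also have "\<dots> = (\<Sum>X\<in>cube n l. a X * a X) - N * (\<Sum>T\<in>M. c T * cnj (c T))"
    by (simp add: sum.distrib sum_subtractf s1 s2 s3)
  also have "\<dots> = of_real ((\<Sum>X\<in>cube n l. (AS n l S G X)\<^sup>2) - real (n ^ l) * (\<Sum>T\<in>M. (cmod (fourier n l G T))\<^sup>2))"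
    by (simp add: a_def c_def N_def mult_cnj_self power2_eq_square)
  finally show ?thesis unfolding a_def b_def c_def by (simp only: of_real_eq_iff)
qed

lemma sos_bess:
  assumes n: "n \<ge> 1" and M: "finite M" "\<And>T. T \<in> M \<Longrightarrow> T \<in> cube n l \<and> suppT T \<subseteq> S"
  shows "sos2_inv n l (\<lambda>G. (\<Sum>X\<in>cube n l. (AS n l S G X)\<^sup>2) / real (n ^ l)
                              - (\<Sum>T\<in>M. (cmod (fourier n l G T))\<^sup>2))"
proof -
  define z where "z X G = of_real (AS n l S G X) - (\<Sum>T\<in>M. fourier n l G T * chi n T X)" for X G
  define r where "r = sqrt (real (n ^ l))"
  have r: "r\<^sup>2 = real (n ^ l)" "r > 0" using n by (auto simp: r_def)
  have cz: "clin n l (z X)" if "X \<in> cube n l" for X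
    unfolding z_def using that M(1)
    by (intro clin_diff clin_of_real lin_AS clin_sum clin_mult clin_fourier) auto
  have eq: "(\<Sum>X\<in>cube n l. (AS n l S G X)\<^sup>2) / real (n ^ l) - (\<Sum>T\<in>M. (cmod (fourier n l G T))\<^sup>2)
      = (\<Sum>X\<in>cube n l. (Re (z X G) / r)\<^sup>2 + (Im (z X G) / r)\<^sup>2)" for G
  proof -
    have "(\<Sum>X\<in>cube n l. (Re (z X G) / r)\<^sup>2 + (Im (z X G) / r)\<^sup>2)
        = (\<Sum>X\<in>cube n l. (cmod (z X G))\<^sup>2) / real (n ^ l)"
      by (simp add: power_divide r(1) cmod_power2 sum_divide_distrib add_divide_distrib)
    also have "\<dots> = ((\<Sum>X\<in>cube n l. (AS n l S G X)\<^sup>2) - real (n ^ l) * (\<Sum>T\<in>M. (cmod (fourier n l G T))\<^sup>2)) / real (n ^ l)"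
      unfolding z_def by (subst bessel_identity[OF n M]) auto
    also have "\<dots> = (\<Sum>X\<in>cube n l. (AS n l S G X)\<^sup>2) / real (n ^ l) - (\<Sum>T\<in>M. (cmod (fourier n l G T))\<^sup>2)"
      using n by (simp add: field_simps)
    finally show ?thesis by simp
  qed
  show ?thesis
    apply (rule sos_cong[OF _ eq])
    apply (intro sos_sum sos_add sos_sq lin_div)
    using cz unfolding clin_def by auto
qed




lemma exists_perm:
  assumes S: "S \<subseteq> {..<l}" "card S = i"
  shows "\<exists>\<sigma>. \<sigma> permutes {..<l} \<and> (\<forall>k<l. \<sigma> k \<in> S \<longleftrightarrow> k < i)"
proof -
  have fS: "finite S" using S(1) finite_subset by blast
  have il: "i \<le> l" using S card_mono[of "{..<l}" S] by auto
  obtain f1 where f1: "bij_betw f1 {..<i} S"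
    using finite_same_card_bij[of "{..<i}" S] fS S(2) by auto
  have "card ({..<l} - S) = card {i..<l}"
    using S fS by (simp add: card_Diff_subset)
  then obtain f2 where f2: "bij_betw f2 {i..<l} ({..<l} - S)"
    using finite_same_card_bij[of "{i..<l}" "{..<l} - S"] by auto
  define \<sigma> where "\<sigma> k = (if k < i then f1 k else if k < l then f2 k else k)" for k
  have b1: "bij_betw \<sigma> {..<i} S"
    using f1 by (rule bij_betw_cong[THEN iffD1, rotated]) (simp add: \<sigma>_def)
  have b2: "bij_betw \<sigma> {i..<l} ({..<l} - S)"
    using f2 by (rule bij_betw_cong[THEN iffD1, rotated]) (simp add: \<sigma>_def)
  have "bij_betw \<sigma> ({..<i} \<union> {i..<l}) (S \<union> ({..<l} - S))"
    by (rule bij_betw_combine[OF b1 b2]) auto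
  moreover have "{..<i} \<union> {i..<l} = {..<l}" using il by auto
  moreover have "S \<union> ({..<l} - S) = {..<l}" using S by auto
  ultimately have b: "bij_betw \<sigma> {..<l} {..<l}" by simp
  have p: "\<sigma> permutes {..<l}"
    by (rule bij_imp_permutes[OF b]) (use il in \<open>simp add: \<sigma>_def\<close>)
  have "\<sigma> k \<in> S \<longleftrightarrow> k < i" if "k < l" for k
  proof (cases "k < i")
    case True then show ?thesis using b1 by (auto dest: bij_betw_apply)
  next
    case False then have "k \<in> {i..<l}" using that by auto
    then have "\<sigma> k \<in> {..<l} - S" using b2 by (rule bij_betw_apply[rotated])
    then show ?thesis using False by auto
  qed
  then show ?thesis using p by blast
qed

lemma permute_cube: "\<sigma> permutes {..<l} \<Longrightarrow> X \<in> cube n l \<Longrightarrow> permute_list \<sigma> X \<in> cube n l"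
  unfolding cube_def by auto

lemma sum_perm_cube:
  assumes p: "\<sigma> permutes {..<l}"
  shows "(\<Sum>X\<in>cube n l. f (permute_list \<sigma> X)) = (\<Sum>X\<in>cube n l. f X)"
proof -
  have pi: "inv \<sigma> permutes {..<l}" using p by (rule permutes_inv)
  have 1: "permute_list (inv \<sigma>) (permute_list \<sigma> X) = X" if "X \<in> cube n l" for X
  proof -
    have "permute_list (inv \<sigma>) (permute_list \<sigma> X) = permute_list (\<sigma> \<circ> inv \<sigma>) X"
      using pi that by (simp add: permute_list_compose cube_length)
    also have "\<sigma> \<circ> inv \<sigma> = id" using p by (rule permutes_inv_o)
    finally show ?thesis by simp
  qed
  have 2: "permute_list \<sigma> (permute_list (inv \<sigma>) X) = X" if "X \<in> cube n l" for X
  proof -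
    have "permute_list \<sigma> (permute_list (inv \<sigma>) X) = permute_list (inv \<sigma> \<circ> \<sigma>) X"
      using p that by (simp add: permute_list_compose cube_length)
    also have "inv \<sigma> \<circ> \<sigma> = id" using p by (rule permutes_inv_o)
    finally show ?thesis by simp
  qed
  show ?thesis
    by (rule sum.reindex_bij_witness[where i="permute_list (inv \<sigma>)" and j="permute_list \<sigma>"])
       (auto simp: 1 2 permute_cube p pi)
qed

lemma perm_mrg:
  assumes p: "\<sigma> permutes {..<l}" and sig: "\<forall>k<l. \<sigma> k \<in> S \<longleftrightarrow> k < i" and il: "i \<le> l"
    and X: "X \<in> cube n l" and Z: "Z \<in> cube n l"
  shows "permute_list \<sigma> (mrg S X Z) = take i (permute_list \<sigma> X) @ drop i (permute_list \<sigma> Z)"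
proof (rule nth_equalityI)
  have lX: "length X = l" and lZ: "length Z = l" using X Z by (auto simp: cube_length)
  show "length (permute_list \<sigma> (mrg S X Z)) = length (take i (permute_list \<sigma> X) @ drop i (permute_list \<sigma> Z))"
    using lX lZ il by simp
  fix k assume "k < length (permute_list \<sigma> (mrg S X Z))"
  then have k: "k < l" using lX by simp
  have sk: "\<sigma> k < l" using permutes_in_image[OF p] k by auto
  show "permute_list \<sigma> (mrg S X Z) ! k = (take i (permute_list \<sigma> X) @ drop i (permute_list \<sigma> Z)) ! k"
    using k sk sig lX lZ il p
    by (auto simp: permute_list_nth nth_mrg nth_append)
qed

lemma inner_sum:
  assumes lb: "l = i + b" and X: "X \<in> cube n l" and n: "n \<ge> 1"
  shows "(\<Sum>Z\<in>cube n l. G (take i X @ drop i Z)) = real (n ^ l) * delta n l G (take i X)"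
proof -
  have lX: "length X = l" using X by (simp add: cube_length)
  have "(\<Sum>Z\<in>cube n l. G (take i X @ drop i Z)) = (\<Sum>Y\<in>cube n i. \<Sum>x\<in>cube n b. G (take i X @ drop i (Y @ x)))"
    unfolding lb by (rule sum_cube_append)
  also have "\<dots> = (\<Sum>Y\<in>cube n i. \<Sum>x\<in>cube n b. G (take i X @ x))"
    by (intro sum.cong refl) (simp add: cube_length)
  also have "\<dots> = real (n ^ i) * (\<Sum>x\<in>cube n b. G (take i X @ x))"
    by (simp add: card_cube)
  also have "\<dots> = real (n ^ l) * delta n l G (take i X)"
    unfolding delta_def using lX lb n by (simp add: card_cube power_add min_def)
  finally show ?thesis .
qed

lemma outer_sum:
  assumes lb: "l = i + b"
  shows "(\<Sum>X\<in>cube n l. f (take i X)) = real (n ^ b) * (\<Sum>Y\<in>cube n i. f Y)"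
proof -
  have "(\<Sum>X\<in>cube n l. f (take i X)) = (\<Sum>Y\<in>cube n i. \<Sum>x\<in>cube n b. f (take i (Y @ x)))"
    unfolding lb by (rule sum_cube_append)
  also have "\<dots> = (\<Sum>Y\<in>cube n i. \<Sum>x\<in>cube n b. f Y)"
    by (intro sum.cong refl) (simp add: cube_length)
  finally show ?thesis by (simp add: card_cube sum_distrib_left)
qed

lemma sos_axpart:
  assumes n: "n \<ge> 1" and S: "S \<subseteq> {..<l}" "card S = i"
  shows "sos2_inv n l (\<lambda>G. (\<Sum>Y\<in>cube n i. (delta n l G Y)\<^sup>2) / real (card (cube n i))
                               - (\<Sum>X\<in>cube n l. (AS n l S G X)\<^sup>2) / real (n ^ l))"
proof -
  obtain \<sigma> where p: "\<sigma> permutes {..<l}" and sig: "\<forall>k<l. \<sigma> k \<in> S \<longleftrightarrow> k < i"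
    using exists_perm[OF S] by blast
  have il: "i \<le> l" using S card_mono[of "{..<l}" S] by auto
  then obtain b where lb: "l = i + b" using le_Suc_ex by blast
  define N where "N = real (n ^ l)"
  have N0: "N > 0" using n by (simp add: N_def)
  define B where "B X G = (\<Sum>Z\<in>cube n l. G (permute_list \<sigma> (mrg S X Z))) / N" for X G
  have QB: "(\<Sum>X\<in>cube n l. (B X G)\<^sup>2) / N
      = (\<Sum>Y\<in>cube n i. (delta n l G Y)\<^sup>2) / real (card (cube n i))" for G
  proof -
    have "(\<Sum>X\<in>cube n l. (B X G)\<^sup>2)
        = (\<Sum>X\<in>cube n l. ((\<Sum>Z\<in>cube n l. G (take i (permute_list \<sigma> X) @ drop i (permute_list \<sigma> Z))) / N)\<^sup>2)"
      unfolding B_def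
      by (intro sum.cong refl arg_cong[where f="\<lambda>t. (t / N)\<^sup>2"] arg_cong[where f=G] perm_mrg[OF p sig il])
    also have "\<dots> = (\<Sum>X\<in>cube n l. ((\<Sum>Z\<in>cube n l. G (take i (permute_list \<sigma> X) @ drop i Z)) / N)\<^sup>2)"
      by (intro sum.cong refl) (simp only: sum_perm_cube[OF p, of "\<lambda>Z. G (take i (permute_list \<sigma> _) @ drop i Z)"])
    also have "\<dots> = (\<Sum>X\<in>cube n l. ((\<Sum>Z\<in>cube n l. G (take i X @ drop i Z)) / N)\<^sup>2)"
      by (rule sum_perm_cube[OF p, of "\<lambda>X. ((\<Sum>Z\<in>cube n l. G (take i X @ drop i Z)) / N)\<^sup>2"])
    also have "\<dots> = (\<Sum>X\<in>cube n l. (delta n l G (take i X))\<^sup>2)"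
      using N0 by (intro sum.cong refl) (simp add: inner_sum[OF lb _ n] N_def)
    also have "\<dots> = real (n ^ b) * (\<Sum>Y\<in>cube n i. (delta n l G Y)\<^sup>2)"
      by (rule outer_sum[OF lb])
    finally show ?thesis
      using n by (simp add: N_def card_cube lb power_add field_simps)
  qed
  have eq: "(\<Sum>Y\<in>cube n i. (delta n l G Y)\<^sup>2) / real (card (cube n i))
                               - (\<Sum>X\<in>cube n l. (AS n l S G X)\<^sup>2) / real (n ^ l)
    = (\<Sum>X\<in>cube n l. \<Sum>Z\<in>cube n l. (- (AS n l S G X + B X G) / N\<^sup>2) *
          (G (mrg S X Z) - G (permute_list \<sigma> (mrg S X Z))))" for G
  proof -
    have D: "(\<Sum>Z\<in>cube n l. (G (mrg S X Z) - G (permute_list \<sigma> (mrg S X Z)))) = N * AS n l S G X - N * B X G" for X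
      using N0 by (simp add: AS_def B_def N_def sum_subtractf)
    have E1: "(\<Sum>Z\<in>cube n l. (- (AS n l S G X + B X G) / N\<^sup>2) *
          (G (mrg S X Z) - G (permute_list \<sigma> (mrg S X Z)))) = ((B X G)\<^sup>2 - (AS n l S G X)\<^sup>2) / N" for X
    proof -
      have "(\<Sum>Z\<in>cube n l. (- (AS n l S G X + B X G) / N\<^sup>2) *
          (G (mrg S X Z) - G (permute_list \<sigma> (mrg S X Z))))
        = (- (AS n l S G X + B X G) / N\<^sup>2) * (N * AS n l S G X - N * B X G)"
        by (simp only: sum_distrib_left[symmetric] D)
      also have "\<dots> = ((B X G)\<^sup>2 - (AS n l S G X)\<^sup>2) / N"
        using N0 by (simp add: power2_eq_square field_simps)
      finally show ?thesis .
    qed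
    have "(\<Sum>X\<in>cube n l. \<Sum>Z\<in>cube n l. (- (AS n l S G X + B X G) / N\<^sup>2) *
          (G (mrg S X Z) - G (permute_list \<sigma> (mrg S X Z))))
       = (\<Sum>X\<in>cube n l. ((B X G)\<^sup>2 - (AS n l S G X)\<^sup>2) / N)"
      by (simp only: E1)
    also have "\<dots> = (\<Sum>X\<in>cube n l. (B X G)\<^sup>2) / N - (\<Sum>X\<in>cube n l. (AS n l S G X)\<^sup>2) / N"
      by (simp add: sum_subtractf sum_divide_distrib diff_divide_distrib)
    finally show ?thesis using QB by (simp add: N_def)
  qed
  have linB: "lin n l (B X)" if "X \<in> cube n l" for X
    unfolding B_def using that p by (intro lin_div lin_sum lin_eval) (auto intro: permute_cube mrg_cube)
  show ?thesis
    apply (rule sos_cong[OF _ eq])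
    apply (intro sos_sum sos_ax lin_div lin_neg lin_add lin_AS linB finite_cube)
    using p by (auto intro: mrg_cube)
qed




definition Dm :: "nat \<Rightarrow> nat \<Rightarrow> (nat list \<Rightarrow> real) \<Rightarrow> nat \<Rightarrow> real" where
  "Dm n l G j = (\<Sum>Y\<in>cube n j. (delta n l G Y)\<^sup>2) / real (card (cube n j))"

lemma lin_delta:
  assumes "Y \<in> cube n j" "j \<le> l"
  shows "lin n l (\<lambda>G. delta n l G Y)"
proof -
  have "Y @ x \<in> cube n l" if "x \<in> cube n (l - length Y)" for x
    using assms that by (auto simp: cube_def)
  then show ?thesis unfolding delta_def by (intro lin_div lin_sum lin_eval) auto
qed

lemma sos_Dm:
  assumes "w \<ge> 0" "j \<le> l"
  shows "sos2_inv n l (\<lambda>G. w * Dm n l G j)"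
proof -
  define q where "q = sqrt (w / real (card (cube n j)))"
  have eq: "w * Dm n l G j = (\<Sum>Y\<in>cube n j. (q * delta n l G Y)\<^sup>2)" for G
    unfolding Dm_def q_def using assms(1)
    by (simp add: power_mult_distrib sum_distrib_left[symmetric] sum_divide_distrib[symmetric])
  show ?thesis
    apply (rule sos_cong[OF _ eq])
    apply (intro sos_sum sos_sq lin_scale lin_delta finite_cube)
    using assms by auto
qed

lemma eta_decomp:
  assumes "i \<le> l"
  shows "eta n l G i = (\<Sum>S\<in>{S. S \<subseteq> {..<l} \<and> card S = i}. \<Sum>T\<in>{T\<in>cube n l. suppT T = S}. (cmod (fourier n l G T))\<^sup>2)"
proof -
  let ?A = "{T\<in>cube n l. wt T = i}"
  let ?SS = "{S. S \<subseteq> {..<l} \<and> card S = i}"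
  have wt: "wt T = card (suppT T)" for T by (simp add: wt_def suppT_def)
  have fA: "finite ?A" by simp
  have fSS: "finite ?SS" by (rule finite_subset[of _ "Pow {..<l}"]) auto
  have img: "suppT ` ?A \<subseteq> ?SS" by (auto simp: wt suppT_def cube_def)
  have "eta n l G i = (\<Sum>S\<in>?SS. \<Sum>T\<in>{x. x \<in> ?A \<and> suppT x = S}. (cmod (fourier n l G T))\<^sup>2)"
    unfolding eta_def by (rule sum.group[OF fA fSS img, symmetric])
  also have "\<dots> = (\<Sum>S\<in>?SS. \<Sum>T\<in>{T\<in>cube n l. suppT T = S}. (cmod (fourier n l G T))\<^sup>2)"
    by (intro sum.cong refl) (auto simp: wt)
  finally show ?thesis .
qed

lemma main_sos:
  assumes n: "n \<ge> 1" and il: "i \<le> l"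
  shows "sos2_inv n l (\<lambda>G. rhsC7 n l G i - eta n l G i)"
proof -
  let ?SS = "{S. S \<subseteq> {..<l} \<and> card S = i}"
  define M where "M S = {T\<in>cube n l. suppT T = S}" for S
  define Q where "Q S G = (\<Sum>X\<in>cube n l. (AS n l S G X)\<^sup>2) / real (n ^ l)" for S G
  define w where "w j = real (l choose i) * (2 ^ i * real (i choose j) - (if j = i then 1 else 0))" for j
  have fSS: "finite ?SS" by (rule finite_subset[of _ "Pow {..<l}"]) auto
  have cSS: "card ?SS = l choose i" using n_subsets[of "{..<l}" i] by simp
  have w0: "w j \<ge> 0" if "j \<in> {0..i}" for j
  proof -
    have "1 \<le> real (i choose j)" using that by (simp add: Suc_leI)
    moreover have "(1::real) \<le> 2 ^ i" by simp
    ultimately have "1 * 1 \<le> (2::real) ^ i * real (i choose j)"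
      by (intro mult_mono) auto
    then show ?thesis by (simp add: w_def)
  qed
  have rest: "rhsC7 n l G i - real (l choose i) * Dm n l G i = (\<Sum>j\<in>{0..i}. w j * Dm n l G j)" for G
  proof -
    have "(\<Sum>j\<in>{0..i}. w j * Dm n l G j)
        = (\<Sum>j\<in>{0..i}. real (l choose i) * 2 ^ i * real (i choose j) * Dm n l G j)
          - (\<Sum>j\<in>{0..i}. if j = i then real (l choose i) * Dm n l G j else 0)"
      unfolding sum_subtractf[symmetric] by (intro sum.cong refl) (simp add: w_def algebra_simps)
    also have "\<dots> = rhsC7 n l G i - real (l choose i) * Dm n l G i"
      unfolding rhsC7_def Dm_def by (simp add: sum_distrib_left algebra_simps)
    finally show ?thesis by simp
  qed
  have eq: "rhsC7 n l G i - eta n l G i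
     = (\<Sum>S\<in>?SS. Q S G - (\<Sum>T\<in>M S. (cmod (fourier n l G T))\<^sup>2))
       + (\<Sum>S\<in>?SS. Dm n l G i - Q S G) + (\<Sum>j\<in>{0..i}. w j * Dm n l G j)" for G
  proof -
    have "(\<Sum>S\<in>?SS. Q S G - (\<Sum>T\<in>M S. (cmod (fourier n l G T))\<^sup>2)) + (\<Sum>S\<in>?SS. Dm n l G i - Q S G)
        = (\<Sum>S\<in>?SS. Dm n l G i) - (\<Sum>S\<in>?SS. \<Sum>T\<in>M S. (cmod (fourier n l G T))\<^sup>2)"
      by (simp only: sum_subtractf[symmetric] sum.distrib[symmetric]) (simp add: sum_subtractf)
    also have "\<dots> = real (l choose i) * Dm n l G i - eta n l G i"
      using cSS by (simp add: eta_decomp[OF il] M_def)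
    finally show ?thesis using rest[of G] by simp
  qed
  show ?thesis
  proof (rule sos_cong[OF _ eq], intro sos_add sos_sum)
    fix S assume S: "S \<in> ?SS"
    show "sos2_inv n l (\<lambda>G. Q S G - (\<Sum>T\<in>M S. (cmod (fourier n l G T))\<^sup>2))"
      unfolding Q_def M_def by (rule sos_bess[OF n]) auto
    show "sos2_inv n l (\<lambda>G. Dm n l G i - Q S G)"
      unfolding Q_def Dm_def using S by (intro sos_axpart[OF n]) auto
  next
    fix j assume "j \<in> {0..i}"
    then show "sos2_inv n l (\<lambda>G. w j * Dm n l G j)"
      using w0 il by (intro sos_Dm) auto
  qed (use fSS in auto)
qed

theorem lemmaC7:
  fixes n l i :: nat and F :: "nat list \<Rightarrow> real"
  assumes "n \<ge> 1" and "perm_invariant n l F" and "i \<le> l"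
  shows "eta n l F i \<le> rhsC7 n l F i
         \<and> sos2_inv n l (\<lambda>G. rhsC7 n l G i - eta n l G i)"
proof
  have SOS: "sos2_inv n l (\<lambda>G. rhsC7 n l G i - eta n l G i)"
    by (rule main_sos[OF assms(1,3)])
  show "sos2_inv n l (\<lambda>G. rhsC7 n l G i - eta n l G i)" by (rule SOS)
  have "rhsC7 n l F i - eta n l F i \<ge> 0"
    using sos_sound[OF SOS assms(2)] by simp
  then show "eta n l F i \<le> rhsC7 n l F i" by simp
qed


end
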